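(* The Hausdorff dimension of the space $\mathcal G_2$ of marked groups on two generators satisfies $\dim_H(\mathcal G_2)\ge\log(2)/6$; in particular it is nonzero.
   Context: $\mathcal G_2$ is the set of normal subgroups of the free group $\mathbb F(a,b)$ (equivalently, marked groups with an ordered generating pair, up to marked isomorphism), endowed with the ultrametric $d(N_1,N_2)=e^{-\lambda}$ for $N_1\ne N_2$, where $\lambda$ is the minimal word length (with respect to $a,b$) of an element of $N_1\triangle N_2$. $\log$ is the natural logarithm. *)

theory Defs
  imports Complex_Main "HOL-Library.Extended_Nonnegative_Real" "HOL-Algebra.Coset"
begin

text \<open>A letter is a pair (g, i): g = False means generator a, g = True means b;
  i = True means the inverse of that generator. Words are lists of letters.\<close>

type_synonym letter = "bool \<times> bool"

definition red_cons :: "letter \<Rightarrow> letter list \<Rightarrow> letter list" where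
  "red_cons x w = (case w of [] \<Rightarrow> [x]
     | y # ys \<Rightarrow> (if fst x = fst y \<and> snd x \<noteq> snd y then ys else x # w))"

definition reduce :: "letter list \<Rightarrow> letter list" where
  "reduce w = foldr red_cons w []"

definition free_group2 :: "letter list monoid" where
  "free_group2 = \<lparr> carrier = {w. reduce w = w}, mult = (\<lambda>u v. reduce (u @ v)), one = [] \<rparr>"

definition G2 :: "letter list set set" where
  "G2 = {N. N \<lhd> free_group2}"

definition marked_dist :: "letter list set \<Rightarrow> letter list set \<Rightarrow> real" where
  "marked_dist N1 N2 = (if N1 = N2 then 0 else
     exp (- real (LEAST n. \<exists>w \<in> (N1 - N2) \<union> (N2 - N1). length w = n)))"

definition set_diam :: "('a \<Rightarrow> 'a \<Rightarrow> real) \<Rightarrow> 'a set \<Rightarrow> real" where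
  "set_diam d A = (if A = {} then 0 else Sup {d x y | x y. x \<in> A \<and> y \<in> A})"

text \<open>Countable delta-covers of X (finite covers included by allowing empty sets).\<close>

definition delta_covers :: "('a \<Rightarrow> 'a \<Rightarrow> real) \<Rightarrow> real \<Rightarrow> 'a set \<Rightarrow> (nat \<Rightarrow> 'a set) set" where
  "delta_covers d \<delta> X = {U. X \<subseteq> (\<Union>n. U n) \<and> (\<forall>n. \<forall>x\<in>U n. \<forall>y\<in>U n. d x y \<le> \<delta>)}"

definition hausdorff_content :: "('a \<Rightarrow> 'a \<Rightarrow> real) \<Rightarrow> real \<Rightarrow> real \<Rightarrow> 'a set \<Rightarrow> ennreal" where
  "hausdorff_content d s \<delta> X =
     (INF U \<in> delta_covers d \<delta> X. (\<Sum>n. ennreal (set_diam d (U n) powr s)))"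

definition hausdorff_measure :: "('a \<Rightarrow> 'a \<Rightarrow> real) \<Rightarrow> real \<Rightarrow> 'a set \<Rightarrow> ennreal" where
  "hausdorff_measure d s X = (SUP \<delta> \<in> {0<..}. hausdorff_content d s \<delta> X)"

text \<open>dim_H X = inf { s > 0 : H^s(X) = 0 } (with inf of the empty set = +infinity).\<close>

definition hausdorff_dim :: "('a \<Rightarrow> 'a \<Rightarrow> real) \<Rightarrow> 'a set \<Rightarrow> ereal" where
  "hausdorff_dim d X = Inf (ereal ` {s. s > 0 \<and> hausdorff_measure d s X = 0})"

end

theory Submission
  imports Defs "HOL-Library.Poly_Mapping" "HOL-Analysis.Analysis"
begin


definition cnc :: "letter \<Rightarrow> letter \<Rightarrow> bool" where
  "cnc x y = (fst x = fst y \<and> snd x \<noteq> snd y)"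

fun rd :: "letter list \<Rightarrow> bool" where
  "rd [] = True" | "rd [x] = True" | "rd (x # y # ys) = (\<not> cnc x y \<and> rd (y # ys))"

definition iv :: "letter \<Rightarrow> letter" where "iv x = (fst x, \<not> snd x)"

lemma red_cons_eq: "red_cons x w = (case w of [] \<Rightarrow> [x] | y # ys \<Rightarrow> (if cnc x y then ys else x # w))"
  by (simp add: red_cons_def cnc_def split: list.split)

lemma rd_tl: "rd (y # ys) \<Longrightarrow> rd ys"
  by (cases ys) auto

lemma rd_red_cons: "rd w \<Longrightarrow> rd (red_cons x w)"
  by (cases w) (auto simp: red_cons_eq dest: rd_tl)

lemma cnc_iv: "cnc x y \<longleftrightarrow> y = iv x"
  by (cases x; cases y) (auto simp: cnc_def iv_def)

lemma cancel: "rd w \<Longrightarrow> red_cons x (red_cons (iv x) w) = w"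
proof (cases w)
  case Nil then show ?thesis by (simp add: red_cons_eq cnc_iv iv_def prod_eq_iff)
next
  case (Cons y ys)
  assume r: "rd w"
  show ?thesis
  proof (cases "cnc (iv x) y")
    case True
    then have y: "y = x" by (simp add: cnc_iv iv_def prod_eq_iff)
    show ?thesis
    proof (cases ys)
      case Nil then show ?thesis using Cons True y by (simp add: red_cons_eq)
    next
      case (Cons z zs)
      then show ?thesis using \<open>w = y # ys\<close> True y r by (simp add: red_cons_eq)
    qed
  next
    case False
    then have "red_cons (iv x) w = iv x # w" using Cons by (simp add: red_cons_eq)
    then show ?thesis by (simp add: red_cons_eq cnc_iv)
  qed
qed

lemma iv_iv: "iv (iv x) = x" by (simp add: iv_def)

definition act :: "letter list \<Rightarrow> letter list \<Rightarrow> letter list" where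
  "act u z = foldr red_cons u z"

lemma act_Cons[simp]: "act (x # u) z = red_cons x (act u z)" by (simp add: act_def)
lemma act_Nil[simp]: "act [] z = z" by (simp add: act_def)
lemma act_append: "act (u @ v) z = act u (act v z)" by (simp add: act_def)
lemma reduce_act: "reduce w = act w []" by (simp add: reduce_def act_def)

lemma rd_act: "rd z \<Longrightarrow> rd (act u z)"
  by (induction u) (auto intro: rd_red_cons)

lemma rd_reduce: "rd (reduce w)" by (simp add: reduce_act rd_act)

lemma reduce_rd: "rd w \<Longrightarrow> reduce w = w"
proof (induction w)
  case Nil then show ?case by (simp add: reduce_def)
next
  case (Cons x w)
  then have "rd w" by (auto dest: rd_tl)
  with Cons have "reduce w = w" by simp
  then show ?case using Cons.prems by (cases w) (auto simp: reduce_def red_cons_eq)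
qed

lemma carrier_rd: "w \<in> carrier free_group2 \<longleftrightarrow> rd w"
proof
  assume "w \<in> carrier free_group2"
  then have "reduce w = w" by (simp add: free_group2_def)
  then show "rd w" using rd_reduce[of w] by simp
qed (simp add: free_group2_def reduce_rd)

lemma act_red_cons: "rd z \<Longrightarrow> rd r \<Longrightarrow> act (red_cons x r) z = red_cons x (act r z)"
proof (cases r)
  case (Cons y ys)
  assume "rd z" "rd r"
  show ?thesis
  proof (cases "cnc x y")
    case True
    then have "x = iv y" by (cases x; cases y) (auto simp: cnc_def iv_def)
    then have "red_cons x (red_cons y (act ys z)) = act ys z"
      using cancel[of "act ys z" "iv y"] rd_act[OF \<open>rd z\<close>, of ys]
      by (simp add: iv_iv)
    then show ?thesis using Cons True by (simp add: red_cons_eq)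
  next
    case False then show ?thesis using Cons by (simp add: red_cons_eq)
  qed
qed (simp add: red_cons_eq)

lemma act_reduce: "rd z \<Longrightarrow> act (reduce u) z = act u z"
proof (induction u)
  case Nil then show ?case by (simp add: reduce_def)
next
  case (Cons x u)
  have "reduce (x # u) = red_cons x (reduce u)" by (simp add: reduce_def)
  then show ?case using Cons act_red_cons[OF Cons.prems rd_reduce] by simp
qed

lemma reduce_idem[simp]: "reduce (reduce w) = reduce w" by (simp add: reduce_rd rd_reduce)

lemma reduce_Nil: "reduce [] = []" by (simp add: reduce_def)

lemma reduce_append: "reduce (u @ v) = act u (reduce v)"
  by (simp add: reduce_act act_append)

definition invw :: "letter list \<Rightarrow> letter list" where "invw w = rev (map iv w)"

lemma act_invw: "rd z \<Longrightarrow> act (invw w) (act w z) = z"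
proof (induction w arbitrary: z)
  case Nil then show ?case by (simp add: invw_def)
next
  case (Cons x w)
  have "act (invw (x # w)) (act (x # w) z) = act (invw w) (red_cons (iv x) (red_cons x (act w z)))"
    by (simp add: invw_def act_append)
  also have "red_cons (iv x) (red_cons x (act w z)) = act w z"
    using cancel[of "act w z" "iv x"] rd_act[OF Cons.prems] by (simp add: iv_def)
  finally show ?case using Cons by simp
qed

lemma group_F: "group free_group2"
proof (rule groupI)
  fix x y z assume "x \<in> carrier free_group2" "y \<in> carrier free_group2" "z \<in> carrier free_group2"
  then have "rd z" by (simp add: carrier_rd)
  show "x \<otimes>\<^bsub>free_group2\<^esub> y \<otimes>\<^bsub>free_group2\<^esub> z = x \<otimes>\<^bsub>free_group2\<^esub> (y \<otimes>\<^bsub>free_group2\<^esub> z)"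
  proof -
    have "reduce (reduce (x @ y) @ z) = act (reduce (x @ y)) (reduce z)" by (simp add: reduce_append)
    also have "\<dots> = act (x @ y) (reduce z)" by (simp add: act_reduce rd_reduce)
    also have "\<dots> = act x (reduce (y @ z))" by (simp add: act_append reduce_append)
    also have "\<dots> = reduce (x @ reduce (y @ z))" using reduce_rd[OF rd_act[OF rd_reduce]] by (simp only: reduce_append)
    finally show ?thesis by (simp add: free_group2_def)
  qed
next
  fix x assume x: "x \<in> carrier free_group2"
  show "\<exists>y\<in>carrier free_group2. y \<otimes>\<^bsub>free_group2\<^esub> x = \<one>\<^bsub>free_group2\<^esub>"
  proof (intro bexI)
    have "rd x" using x by (simp add: carrier_rd)
    show "reduce (invw x) \<otimes>\<^bsub>free_group2\<^esub> x = \<one>\<^bsub>free_group2\<^esub>"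
    proof -
      have "reduce (reduce (invw x) @ x) = act (reduce (invw x)) (reduce x)" by (simp add: reduce_append)
      also have "\<dots> = act (invw x) (act x [])" using act_reduce[OF rd_reduce] by (simp only: reduce_act)
      also have "\<dots> = []" using act_invw[of "[]" x] by simp
      finally show ?thesis by (simp add: free_group2_def)
    qed
    show "reduce (invw x) \<in> carrier free_group2" by (simp add: carrier_rd rd_reduce)
  qed
next
  fix x y assume "x \<in> carrier free_group2" "y \<in> carrier free_group2"
  show "x \<otimes>\<^bsub>free_group2\<^esub> y \<in> carrier free_group2"
    unfolding free_group2_def by (simp only: partial_object.simps monoid.simps mem_Collect_eq reduce_idem)
next
  show "\<one>\<^bsub>free_group2\<^esub> \<in> carrier free_group2"
    unfolding free_group2_def by (simp only: partial_object.simps monoid.simps mem_Collect_eq reduce_Nil)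
next
  fix x assume "x \<in> carrier free_group2"
  then show "\<one>\<^bsub>free_group2\<^esub> \<otimes>\<^bsub>free_group2\<^esub> x = x"
    unfolding free_group2_def by (simp only: partial_object.simps monoid.simps mem_Collect_eq append_Nil)
qed



type_synonym lp = "int \<Rightarrow>\<^sub>0 int"
definition tp :: "int \<Rightarrow> lp" where "tp n = Poly_Mapping.single n 1"

lemma tp_mult: "tp a * tp b = tp (a + b)" by (simp add: tp_def Poly_Mapping.mult_single)
lemma tp_mult2: "tp a * (tp b * c) = tp (a + b) * c" by (simp add: tp_mult flip: mult.assoc)
lemma tp_0[simp]: "tp 0 = 1" by (simp add: tp_def)

type_synonym hel = "int \<times> lp \<times> lp \<times> lp"
definition hm :: "hel \<Rightarrow> hel \<Rightarrow> hel" where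
  "hm a b = (case a of (n,x,y,z) \<Rightarrow> case b of (n',x',y',z') \<Rightarrow>
     (n+n', x + tp n * x', y + tp (-n) * y', z + z' + x * (tp (-n) * y')))"

lemma hm_simp[simp]: "hm (n,x,y,z) (n',x',y',z') = (n+n', x + tp n * x', y + tp (-n) * y', z + z' + x * (tp (-n) * y'))"
  by (simp add: hm_def)

lemma hm_assoc: "hm (hm a b) c = hm a (hm b c)"
proof -
  obtain n x y z where a: "a = (n,x,y,z)" by (cases a) auto
  obtain n' x' y' z' where b: "b = (n',x',y',z')" by (cases b) auto
  obtain n'' x'' y'' z'' where c: "c = (n'',x'',y'',z'')" by (cases c) auto
  have e1: "tp n * tp (- n - n') = tp (-n')" by (simp add: tp_mult)
  have e2: "tp (- n) * tp (- n') = tp (- n - n')" by (simp add: tp_mult)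
  have e3: "tp n * tp n' = tp (n + n')" by (simp add: tp_mult)
  have 1: "fst (hm (hm a b) c) = fst (hm a (hm b c))" by (simp add: a b c)
  have 2: "fst (snd (hm (hm a b) c)) = fst (snd (hm a (hm b c)))"
    by (simp add: a b c distrib_left e3 flip: mult.assoc)
  have 3: "fst (snd (snd (hm (hm a b) c))) = fst (snd (snd (hm a (hm b c))))"
    by (simp add: a b c distrib_left e2 flip: mult.assoc)
  have 4: "snd (snd (snd (hm (hm a b) c))) = snd (snd (snd (hm a (hm b c))))"
    by (simp add: a b c distrib_left distrib_right e1 e2 flip: mult.assoc)
  show ?thesis using 1 2 3 4 by (simp add: prod_eq_iff)
qed

definition hone :: hel where "hone = (0,0,0,0)"
lemma hm_one[simp]: "hm hone a = a" "hm a hone = a"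
  by (cases a; simp add: hone_def)+

fun gen :: "letter \<Rightarrow> hel" where
  "gen (False, False) = (1,0,0,0)" | "gen (False, True) = (-1,0,0,0)"
| "gen (True, False) = (0,1,1,0)" | "gen (True, True) = (0,-1,-1,1)"

lemma gen_cnc0: "hm (gen (a, b)) (gen (a, \<not> b)) = hone"
  by (cases a; cases b) (simp_all add: hone_def)

lemma gen_cnc: "cnc x y \<Longrightarrow> hm (gen x) (gen y) = hone"
proof -
  assume "cnc x y"
  then obtain a b where "x = (a,b)" "y = (a, \<not> b)"
    by (cases x; cases y) (auto simp: cnc_def)
  then show ?thesis by (simp add: gen_cnc0)
qed

definition ev :: "letter list \<Rightarrow> hel" where "ev w = foldr (\<lambda>l acc. hm (gen l) acc) w hone"

lemma ev_Nil[simp]: "ev [] = hone" by (simp add: ev_def)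
lemma ev_Cons[simp]: "ev (x # w) = hm (gen x) (ev w)" by (simp add: ev_def)
lemma ev_append: "ev (u @ v) = hm (ev u) (ev v)"
  by (induction u) (auto simp: hm_assoc)

lemma ev_red_cons: "ev (red_cons x w) = hm (gen x) (ev w)"
proof (cases w)
  case (Cons y ys)
  then show ?thesis
    by (auto simp: red_cons_eq gen_cnc simp flip: hm_assoc)
qed (simp add: red_cons_eq)

lemma ev_act: "ev (act u z) = hm (ev u) (ev z)"
  by (induction u) (auto simp: ev_red_cons hm_assoc)

lemma ev_reduce: "ev (reduce w) = ev w"
  by (simp add: reduce_act ev_act)

lemma ev_mult: "ev (u \<otimes>\<^bsub>free_group2\<^esub> v) = hm (ev u) (ev v)"
  by (simp add: free_group2_def ev_reduce ev_append)

lemma inv_F: "w \<in> carrier free_group2 \<Longrightarrow> inv\<^bsub>free_group2\<^esub> w = reduce (invw w)"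
proof -
  assume w: "w \<in> carrier free_group2"
  then have "rd w" by (simp add: carrier_rd)
  have "reduce (reduce (invw w) @ w) = act (reduce (invw w)) (reduce w)" by (simp add: reduce_append)
  also have "\<dots> = act (invw w) (act w [])" using act_reduce[OF rd_reduce] by (simp only: reduce_act)
  also have "\<dots> = []" using act_invw[of "[]" w] by simp
  finally have "reduce (invw w) \<otimes>\<^bsub>free_group2\<^esub> w = \<one>\<^bsub>free_group2\<^esub>" by (simp add: free_group2_def)
  then show ?thesis using group.inv_equality[OF group_F] w by (simp add: carrier_rd rd_reduce)
qed

lemma ev_inv: "w \<in> carrier free_group2 \<Longrightarrow> hm (ev (inv\<^bsub>free_group2\<^esub> w)) (ev w) = hone"
proof -
  assume w: "w \<in> carrier free_group2"
  have "hm (ev (inv\<^bsub>free_group2\<^esub> w)) (ev w) = ev (inv\<^bsub>free_group2\<^esub> w \<otimes>\<^bsub>free_group2\<^esub> w)"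
    by (simp add: ev_mult)
  also have "\<dots> = ev \<one>\<^bsub>free_group2\<^esub>" using group.l_inv[OF group_F w] by simp
  finally show ?thesis by (simp add: free_group2_def)
qed

lemma ev_inv2: "w \<in> carrier free_group2 \<Longrightarrow> hm (ev w) (ev (inv\<^bsub>free_group2\<^esub> w)) = hone"
proof -
  assume w: "w \<in> carrier free_group2"
  have "hm (ev w) (ev (inv\<^bsub>free_group2\<^esub> w)) = ev (w \<otimes>\<^bsub>free_group2\<^esub> inv\<^bsub>free_group2\<^esub> w)"
    by (simp add: ev_mult)
  also have "\<dots> = ev \<one>\<^bsub>free_group2\<^esub>" using group.r_inv[OF group_F w] by simp
  finally show ?thesis by (simp add: free_group2_def)
qed

definition zin :: "nat set \<Rightarrow> lp \<Rightarrow> bool" where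
  "zin X z = ((\<forall>j. Poly_Mapping.lookup z (-j) = - Poly_Mapping.lookup z j) \<and> (\<forall>j\<ge>1. nat (j-1) \<notin> X \<longrightarrow> Poly_Mapping.lookup z j = 0))"

definition NX :: "nat set \<Rightarrow> letter list set" where
  "NX X = {w. rd w \<and> (\<exists>z. ev w = (0,0,0,z) \<and> zin X z)}"

lemma zin_0: "zin X 0" by (simp add: zin_def)
lemma zin_add: "zin X a \<Longrightarrow> zin X b \<Longrightarrow> zin X (a + b)" by (simp add: zin_def Poly_Mapping.lookup_add)
lemma zin_uminus: "zin X a \<Longrightarrow> zin X (- a)" by (simp add: zin_def)

lemma hm_c_left: "hm e (0,0,0,z) = hone \<Longrightarrow> e = (0,0,0,-z)"
  by (cases e) (auto simp: hone_def eq_neg_iff_add_eq_0)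

lemma hm_central: "hm e (0,0,0,z) = hm (0,0,0,z) e"
  by (cases e) (simp add: add.commute)

lemma NX_normal: "NX X \<lhd> free_group2"
proof -
  interpret G: group free_group2 by (rule group_F)
  have sub: "subgroup (NX X) free_group2"
  proof (rule G.subgroupI)
    show "NX X \<subseteq> carrier free_group2" by (auto simp: NX_def carrier_rd)
    have "[] \<in> NX X" by (auto simp: NX_def hone_def zin_0)
    then show "NX X \<noteq> {}" by blast
  next
    fix a assume a: "a \<in> NX X"
    then obtain z where z: "ev a = (0,0,0,z)" "zin X z" and ac: "a \<in> carrier free_group2"
      by (auto simp: NX_def carrier_rd)
    have "ev (inv\<^bsub>free_group2\<^esub> a) = (0,0,0,-z)"
      using ev_inv[OF ac] z by (intro hm_c_left) simp
    moreover have "rd (inv\<^bsub>free_group2\<^esub> a)" using G.inv_closed[OF ac] by (simp add: carrier_rd)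
    ultimately show "inv\<^bsub>free_group2\<^esub> a \<in> NX X" using z by (auto simp: NX_def zin_uminus)
  next
    fix a b assume a: "a \<in> NX X" and b: "b \<in> NX X"
    then obtain z z' where z: "ev a = (0,0,0,z)" "zin X z" "ev b = (0,0,0,z')" "zin X z'"
      and ac: "a \<in> carrier free_group2" and bc: "b \<in> carrier free_group2"
      by (auto simp: NX_def carrier_rd)
    have "rd (a \<otimes>\<^bsub>free_group2\<^esub> b)" using G.m_closed[OF ac bc] by (simp add: carrier_rd)
    then show "a \<otimes>\<^bsub>free_group2\<^esub> b \<in> NX X" using z by (auto simp: NX_def ev_mult zin_add)
  qed
  show ?thesis unfolding G.normal_inv_iff
  proof (intro conjI sub ballI)
    fix g h assume g: "g \<in> carrier free_group2" and h: "h \<in> NX X"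
    then obtain z where z: "ev h = (0,0,0,z)" "zin X z" and hc: "h \<in> carrier free_group2"
      by (auto simp: NX_def carrier_rd)
    have "ev (g \<otimes>\<^bsub>free_group2\<^esub> h \<otimes>\<^bsub>free_group2\<^esub> inv\<^bsub>free_group2\<^esub> g)
        = hm (hm (ev g) (0,0,0,z)) (ev (inv\<^bsub>free_group2\<^esub> g))" by (simp add: ev_mult z)
    also have "\<dots> = hm (0,0,0,z) (hm (ev g) (ev (inv\<^bsub>free_group2\<^esub> g)))"
      by (simp add: hm_central hm_assoc)
    also have "\<dots> = (0,0,0,z)" using ev_inv2[OF g] by (simp add: hone_def)
    finally have "ev (g \<otimes>\<^bsub>free_group2\<^esub> h \<otimes>\<^bsub>free_group2\<^esub> inv\<^bsub>free_group2\<^esub> g) = (0,0,0,z)" .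
    moreover have "rd (g \<otimes>\<^bsub>free_group2\<^esub> h \<otimes>\<^bsub>free_group2\<^esub> inv\<^bsub>free_group2\<^esub> g)"
      using g hc by (simp add: carrier_rd[symmetric])
    ultimately show "g \<otimes>\<^bsub>free_group2\<^esub> h \<otimes>\<^bsub>free_group2\<^esub> inv\<^bsub>free_group2\<^esub> g \<in> NX X"
      using z by (auto simp: NX_def)
  qed
qed



abbreviation "LA \<equiv> (False, False)"
abbreviation "LA' \<equiv> (False, True)"
abbreviation "LB \<equiv> (True, False)"
abbreviation "LB' \<equiv> (True, True)"

definition wk :: "nat \<Rightarrow> letter list" where
  "wk k = replicate (Suc k) LA @ LB # replicate (Suc k) LA' @ LB # replicate (Suc k) LA @ LB' # replicate (Suc k) LA' @ [LB']"

lemma length_wk: "length (wk k) = 4 * k + 8" by (simp add: wk_def)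

lemma rd_rep: "rd (y # ys) \<Longrightarrow> \<not> cnc x y \<Longrightarrow> \<not> cnc x x \<Longrightarrow> rd (replicate (Suc j) x @ y # ys)"
  by (induction j) auto

lemma rd_Cons_rep: "rd (replicate (Suc j) x @ z) \<Longrightarrow> \<not> cnc y x \<Longrightarrow> rd (y # replicate (Suc j) x @ z)"
  by simp

lemma rd_wk: "rd (wk k)"
  unfolding wk_def
  apply (intro rd_rep rd_Cons_rep)
  apply (simp_all only: cnc_def fst_conv snd_conv)
  apply simp_all
  done

lemma ev_repA: "ev (replicate m LA) = (int m, 0, 0, 0)"
  by (induction m) (auto simp: hone_def)

lemma ev_repA': "ev (replicate m LA') = (- int m, 0, 0, 0)"
  by (induction m) (auto simp: hone_def)

lemma ev_wk_gen: "hm (m,0,0,0) (hm (0,1,1,0) (hm (-m,0,0,0) (hm (0,1,1,0) (hm (m,0,0,0) (hm (0,-1,-1,1) (hm (-m,0,0,0) (0,-1,-1,1)))))))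
   = (0,0,0, tp m - tp (-m))"
  by (simp add: algebra_simps tp_mult)

lemma ev_wk: "ev (wk k) = (0,0,0, tp (int (Suc k)) - tp (- int (Suc k)))"
proof -
  define m where "m = int (Suc k)"
  have 1: "ev (replicate (Suc k) LA) = (m,0,0,0)" by (simp only: ev_repA m_def)
  have 2: "ev (replicate (Suc k) LA') = (-m,0,0,0)" by (simp only: ev_repA' m_def)
  have "ev (wk k) = hm (m,0,0,0) (hm (0,1,1,0) (hm (-m,0,0,0) (hm (0,1,1,0) (hm (m,0,0,0) (hm (0,-1,-1,1) (hm (-m,0,0,0) (hm (0,-1,-1,1) (0,0,0,0))))))))"
    unfolding wk_def by (simp only: ev_append ev_Cons ev_Nil 1 2 gen.simps hone_def)
  also have "\<dots> = (0,0,0, tp m - tp (-m))" by (simp add: algebra_simps tp_mult)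
  finally show ?thesis by (simp add: m_def)
qed

lemma lookup_tp: "Poly_Mapping.lookup (tp a) j = (if a = j then 1 else 0)"
  by (simp add: tp_def Poly_Mapping.lookup_single when_def)

lemma zin_wk: "zin X (tp (int (Suc k)) - tp (- int (Suc k))) \<longleftrightarrow> k \<in> X"
proof
  assume "zin X (tp (int (Suc k)) - tp (- int (Suc k)))"
  then have "nat (int (Suc k) - 1) \<notin> X \<longrightarrow> Poly_Mapping.lookup (tp (int (Suc k)) - tp (- int (Suc k))) (int (Suc k)) = 0"
    unfolding zin_def by (metis of_nat_0_less_iff zero_less_Suc int_one_le_iff_zero_less)
  then show "k \<in> X" by (auto simp: Poly_Mapping.lookup_minus lookup_tp)
next
  assume k: "k \<in> X"
  show "zin X (tp (int (Suc k)) - tp (- int (Suc k)))"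
    unfolding zin_def
  proof (intro conjI allI impI)
    fix j :: int
    show "Poly_Mapping.lookup (tp (int (Suc k)) - tp (- int (Suc k))) (- j) =
      - Poly_Mapping.lookup (tp (int (Suc k)) - tp (- int (Suc k))) j"
      by (auto simp: Poly_Mapping.lookup_minus lookup_tp)
    assume "1 \<le> j" "nat (j - 1) \<notin> X"
    then show "Poly_Mapping.lookup (tp (int (Suc k)) - tp (- int (Suc k))) j = 0"
      using k by (auto simp: Poly_Mapping.lookup_minus lookup_tp)
  qed
qed

lemma wk_NX: "wk k \<in> NX X \<longleftrightarrow> k \<in> X"
  using zin_wk[of X k] by (simp only: NX_def mem_Collect_eq rd_wk ev_wk prod.inject simp_thms ex_simps)

lemma NX_G2: "NX X \<in> G2"
  by (simp add: G2_def NX_normal)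



definition indn :: "nat set \<Rightarrow> nat \<Rightarrow> real" where "indn X k = (if k \<in> X then 1 else 0)"

definition rrb :: "nat set \<Rightarrow> real" where "rrb X = (suminf (\<lambda>k. indn X k / 2 ^ Suc k))"

lemma geo_half: "(\<lambda>k. (1/2::real) ^ k) sums 2"
  using geometric_sums[of "1/2::real"] by simp

lemma summable_bnd: "\<lbrakk>\<And>k. \<bar>f k\<bar> \<le> c * (1/2)^k\<rbrakk> \<Longrightarrow> summable (f :: nat \<Rightarrow> real)"
  by (rule summable_comparison_test[of _ "\<lambda>k. c * (1/2)^k"])
     (auto intro!: summable_mult summable_geometric)

lemma indn_bound: "\<bar>indn X k / 2 ^ Suc k\<bar> \<le> 1/2 * (1/2)^k"
  by (simp add: indn_def power_one_over)

lemma rr_summable: "summable (\<lambda>k. indn X k / 2 ^ Suc k)"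
  by (rule summable_bnd[OF indn_bound])

lemma rr_diff:
  assumes "\<And>j. j < k \<Longrightarrow> (j \<in> X \<longleftrightarrow> j \<in> Y)"
  shows "\<bar>rrb X - rrb Y\<bar> \<le> 1 / 2 ^ k"
proof -
  define f where "f j = (indn X j - indn Y j) / 2 ^ Suc j" for j
  have fb: "\<bar>f j\<bar> \<le> 1 * (1/2)^j" for j
    unfolding f_def indn_def by (auto simp: power_one_over field_simps)
  have sf: "summable f" by (rule summable_bnd[OF fb])
  have "rrb X - rrb Y = suminf f"
    unfolding rrb_def f_def using rr_summable[of X] rr_summable[of Y]
    by (simp add: suminf_diff diff_divide_distrib)
  also have "\<dots> = (suminf (\<lambda>i. f (i + k))) + (\<Sum>i<k. f i)" by (rule suminf_split_initial_segment[OF sf])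
  also have "(\<Sum>i<k. f i) = 0" using assms by (simp add: f_def indn_def)
  finally have e: "rrb X - rrb Y = (suminf (\<lambda>i. f (i + k)))" by simp
  have fb2: "\<bar>f (i + k)\<bar> \<le> (1 / 2 ^ Suc k) * (1/2)^i" for i
    by (simp add: f_def indn_def power_one_over power_add field_simps)
  have s2: "summable (\<lambda>i. (1 / 2 ^ Suc k) * (1/2::real)^i)"
    by (intro summable_mult summable_geometric) simp
  have "\<bar>suminf (\<lambda>i. f (i + k))\<bar> \<le> (suminf (\<lambda>i. \<bar>f (i + k)\<bar>))"
    using summable_norm[of "\<lambda>i. f (i + k)"] summable_comparison_test[of "\<lambda>i. \<bar>f (i+k)\<bar>", OF _ s2] fb2
    by auto
  also have "\<dots> \<le> (suminf (\<lambda>i. (1 / 2 ^ Suc k) * (1/2::real)^i))"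
    by (rule suminf_le[OF fb2 _ s2]) (rule summable_comparison_test[OF _ s2], use fb2 in auto)
  also have "\<dots> = 1 / 2 ^ k"
    using sums_unique[OF sums_mult[OF geo_half, of "1 / 2 ^ Suc k"]] by simp
  finally show ?thesis using e by simp
qed

lemma floor_double: "\<lfloor>2 * (y::real)\<rfloor> = 2 * \<lfloor>y\<rfloor> + (if odd \<lfloor>2 * y\<rfloor> then 1 else 0)"
proof -
  have a: "2 * \<lfloor>y\<rfloor> \<le> \<lfloor>2 * y\<rfloor>" by (metis floor_mono floor_of_int le_floor_iff mult_left_mono of_int_floor_le of_int_mult of_int_numeral zero_le_numeral)
  have b: "\<lfloor>2 * y\<rfloor> \<le> 2 * \<lfloor>y\<rfloor> + 1"
  proof -
    have "2 * y < 2 * \<lfloor>y\<rfloor> + 2" using real_of_int_floor_add_one_gt[of y] by linarith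
    then have "\<lfloor>2 * y\<rfloor> < 2 * \<lfloor>y\<rfloor> + 2" by (simp add: floor_less_iff)
    then show ?thesis by linarith
  qed
  show ?thesis using a b by (cases "\<lfloor>2 * y\<rfloor> = 2 * \<lfloor>y\<rfloor>") auto
qed

lemma rr_surj:
  fixes x :: real assumes x: "0 \<le> x" "x < 1"
  shows "\<exists>X. rrb X = x"
proof -
  define X where "X = {k. odd \<lfloor>x * 2 ^ Suc k\<rfloor>}"
  have ps: "(\<Sum>k<n. indn X k / 2 ^ Suc k) = \<lfloor>x * 2 ^ n\<rfloor> / 2 ^ n" for n
  proof (induction n)
    case 0 then show ?case using x by (simp add: floor_eq_iff)
  next
    case (Suc n)
    have E: "\<lfloor>x * 2 ^ Suc n\<rfloor> = 2 * \<lfloor>x * 2 ^ n\<rfloor> + (if n \<in> X then 1 else 0)"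
      using floor_double[of "x * 2 ^ n"] by (simp add: X_def mult_ac)
    have fd: "real_of_int \<lfloor>x * 2 ^ Suc n\<rfloor> = 2 * real_of_int \<lfloor>x * 2 ^ n\<rfloor> + indn X n"
      unfolding indn_def using arg_cong[OF E, of real_of_int] by (simp split: if_splits)
    show ?case using Suc fd by (simp add: field_simps)
  qed
  have lim: "(\<lambda>n. \<lfloor>x * 2 ^ n\<rfloor> / 2 ^ n) \<longlonglongrightarrow> x"
  proof -
    have le: "\<bar>\<lfloor>x * 2 ^ n\<rfloor> / 2 ^ n - x\<bar> \<le> (1/2) ^ n" for n
    proof -
      have "x * 2 ^ n - 1 < \<lfloor>x * 2 ^ n\<rfloor>" "\<lfloor>x * 2 ^ n\<rfloor> \<le> x * 2 ^ n" by linarith+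
      then have "\<bar>\<lfloor>x * 2 ^ n\<rfloor> - x * 2 ^ n\<bar> \<le> 1" by linarith
      then have h1: "\<bar>\<lfloor>x * 2 ^ n\<rfloor> - x * 2 ^ n\<bar> / 2 ^ n \<le> 1 / 2 ^ n"
        by (intro divide_right_mono) auto
      have "\<lfloor>x * 2 ^ n\<rfloor> / 2 ^ n - x = (\<lfloor>x * 2 ^ n\<rfloor> - x * 2 ^ n) / 2 ^ n"
        by (simp add: field_simps)
      then show ?thesis using h1 by (simp add: abs_divide power_one_over)
    qed
    have "(\<lambda>n. (1/2::real) ^ n) \<longlonglongrightarrow> 0" by (rule LIMSEQ_power_zero) simp
    then show ?thesis
      by (rule Lim_null_comparison[THEN LIM_zero_cancel, rotated]) (use le in \<open>auto simp: dist_real_def\<close>)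
  qed
  have "(\<lambda>k. indn X k / 2 ^ Suc k) sums x"
    unfolding sums_def using lim ps by simp
  then show ?thesis by (auto simp: rrb_def sums_iff)
qed

lemma set_diam_props:
  assumes d01: "\<And>x y. 0 \<le> d x y \<and> d x y \<le> 1" and dxx: "\<And>x. d x x = 0"
  shows "0 \<le> set_diam d A" "set_diam d A \<le> 1" "\<And>x y. x \<in> A \<Longrightarrow> y \<in> A \<Longrightarrow> d x y \<le> set_diam d A"
proof -
  let ?S = "{d x y | x y. x \<in> A \<and> y \<in> A}"
  have bdd: "bdd_above ?S" using d01 by (auto intro!: bdd_aboveI[of _ 1])
  show up: "\<And>x y. x \<in> A \<Longrightarrow> y \<in> A \<Longrightarrow> d x y \<le> set_diam d A"
  proof -
    fix x y assume "x \<in> A" "y \<in> A"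
    then have "d x y \<in> ?S" by blast
    then show "d x y \<le> set_diam d A" using \<open>x \<in> A\<close> bdd by (auto simp: set_diam_def intro: cSup_upper)
  qed
  show "0 \<le> set_diam d A"
  proof (cases "A = {}")
    case False then obtain x where "x \<in> A" by blast
    then show ?thesis using up[of x x] dxx[of x] by simp
  qed (simp add: set_diam_def)
  show "set_diam d A \<le> 1"
  proof (cases "A = {}")
    case False
    then have "?S \<noteq> {}" by blast
    have "Sup ?S \<le> 1" by (rule cSup_least[OF \<open>?S \<noteq> {}\<close>]) (use d01 in auto)
    then show ?thesis using False by (simp add: set_diam_def)
  qed (simp add: set_diam_def)
qed

lemma cover_bound:
  fixes d :: "'a \<Rightarrow> 'a \<Rightarrow> real" and \<phi> :: "nat set \<Rightarrow> 'a" and U :: "nat \<Rightarrow> 'a set"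
  assumes d01: "\<And>x y. 0 \<le> d x y \<and> d x y \<le> 1" and dxx: "\<And>x. d x x = 0"
    and hold: "\<And>X Y. \<bar>rrb X - rrb Y\<bar> \<le> 4 * d (\<phi> X) (\<phi> Y) powr b"
    and sb: "0 < s" "s \<le> b"
    and cov: "\<And>X. \<phi> X \<in> (\<Union>n. U n)"
  shows "1 \<le> 8 * (suminf (\<lambda>n. ennreal (set_diam d (U n) powr s)))"
proof -
  define D where "D n = set_diam d (U n)" for n
  have D0: "0 \<le> D n" and D1: "D n \<le> 1" and Dup: "\<And>x y. x \<in> U n \<Longrightarrow> y \<in> U n \<Longrightarrow> d x y \<le> D n" for n
    unfolding D_def
      apply (rule set_diam_props(1)[of d], use d01 dxx in auto)
     apply (rule set_diam_props(2)[of d], use d01 dxx in auto)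
    apply (rule set_diam_props(3)[of d], use d01 dxx in auto)
    done
  define c where "c n = rrb (SOME X. \<phi> X \<in> U n)" for n
  define I where "I n = (if \<exists>X. \<phi> X \<in> U n then {c n - 4 * D n powr b .. c n + 4 * D n powr b} else {})" for n
  have covI: "{0..<1} \<subseteq> (\<Union>n. I n)"
  proof
    fix x :: real assume "x \<in> {0..<1}"
    then obtain X where X: "rrb X = x" using rr_surj by auto
    obtain n where n: "\<phi> X \<in> U n" using cov[of X] by auto
    then have ex: "\<exists>X. \<phi> X \<in> U n" by blast
    define Y where "Y = (SOME X. \<phi> X \<in> U n)"
    have Y: "\<phi> Y \<in> U n" unfolding Y_def using someI_ex[OF ex] .
    have "\<bar>rrb X - rrb Y\<bar> \<le> 4 * d (\<phi> X) (\<phi> Y) powr b" by (rule hold)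
    also have "\<dots> \<le> 4 * D n powr b"
      using powr_mono2[of b "d (\<phi> X) (\<phi> Y)" "D n"] sb d01 Dup[OF n Y] by simp
    finally have "x \<in> I n" using ex X by (auto simp: I_def c_def Y_def)
    then show "x \<in> (\<Union>n. I n)" by blast
  qed
  have mI: "emeasure lborel (I n) \<le> ennreal (8 * D n powr s)" for n
  proof (cases "\<exists>X. \<phi> X \<in> U n")
    case True
    have "D n powr b \<le> D n powr s" using powr_mono'[OF sb(2) D0 D1] .
    moreover have "0 \<le> D n powr b" by simp
    ultimately show ?thesis using True by (simp add: I_def)
  next
    case False then show ?thesis by (simp add: I_def)
  qed
  have "ennreal 1 = emeasure lborel {0..<(1::real)}" by simp
  also have "\<dots> \<le> emeasure lborel (\<Union>n. I n)" by (rule emeasure_mono[OF covI]) (auto simp: I_def)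
  also have "\<dots> \<le> (suminf (\<lambda>n. emeasure lborel (I n)))" by (rule emeasure_subadditive_countably) (auto simp: I_def)
  also have "\<dots> \<le> (suminf (\<lambda>n. ennreal (8 * D n powr s)))" by (rule suminf_le[OF mI summableI summableI])
  also have "\<dots> = (suminf (\<lambda>n. 8 * ennreal (D n powr s)))" by (simp add: ennreal_mult)
  also have "\<dots> = 8 * (suminf (\<lambda>n. ennreal (D n powr s)))" by simp
  finally show ?thesis by (simp add: D_def)
qed


lemma md_props: "0 \<le> marked_dist N M \<and> marked_dist N M \<le> 1" "marked_dist N N = 0"
  by (auto simp: marked_dist_def)

lemma hold: "\<bar>rrb X - rrb Y\<bar> \<le> 4 * marked_dist (NX X) (NX Y) powr (ln 2 / 4)"
proof (cases "X = Y")
  case True then show ?thesis by (simp add: marked_dist_def)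
next
  case False
  then have ex: "\<exists>k. (k \<in> X) \<noteq> (k \<in> Y)" by blast
  define k where "k = (LEAST k. (k \<in> X) \<noteq> (k \<in> Y))"
  have kd: "(k \<in> X) \<noteq> (k \<in> Y)" unfolding k_def by (rule LeastI_ex[OF ex])
  have agree: "\<And>j. j < k \<Longrightarrow> (j \<in> X \<longleftrightarrow> j \<in> Y)" unfolding k_def using not_less_Least by blast
  have wmem: "wk k \<in> (NX X - NX Y) \<union> (NX Y - NX X)" using kd by (auto simp: wk_NX)
  then have ne: "NX X \<noteq> NX Y" by blast
  define L where "L = (LEAST n. \<exists>w \<in> (NX X - NX Y) \<union> (NX Y - NX X). length w = n)"
  have "L \<le> length (wk k)" unfolding L_def by (rule Least_le) (use wmem in blast)
  then have Lb: "real L \<le> 4 * real k + 8" by (simp add: length_wk)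
  have md: "marked_dist (NX X) (NX Y) = exp (- real L)" using ne by (simp add: marked_dist_def L_def)
  have "exp (- (4 * real k + 8)) \<le> marked_dist (NX X) (NX Y)" using Lb md by simp
  then have "exp (- (4 * real k + 8)) powr (ln 2 / 4) \<le> marked_dist (NX X) (NX Y) powr (ln 2 / 4)"
    by (intro powr_mono2) auto
  moreover have "exp (- (4 * real k + 8)) powr (ln 2 / 4) = 1 / 2 ^ (k + 2)"
  proof -
    have "exp (- (4 * real k + 8)) powr (ln 2 / 4) = exp (- (real (k + 2) * ln 2))"
      by (simp add: powr_def algebra_simps)
    also have "\<dots> = 1 / exp (real (k + 2) * ln 2)" by (simp only: exp_minus inverse_eq_divide)
    also have "exp (real (k + 2) * ln 2) = 2 ^ (k + 2)" by (subst exp_of_nat_mult) simp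
    finally show ?thesis .
  qed
  ultimately have "1 / 2 ^ (k + 2) \<le> marked_dist (NX X) (NX Y) powr (ln 2 / 4)" by simp
  then have "1 / 2 ^ k \<le> 4 * marked_dist (NX X) (NX Y) powr (ln 2 / 4)" by (simp add: power_add)
  then show ?thesis using rr_diff[where k=k and X=X and Y=Y, OF agree] by linarith
qed

lemma hm_pos: assumes "0 < s" "s \<le> ln 2 / 4" shows "hausdorff_measure marked_dist s G2 \<noteq> 0"
proof -
  have "ennreal (1/8) \<le> hausdorff_content marked_dist s 1 G2"
    unfolding hausdorff_content_def
  proof (rule INF_greatest)
    fix U assume "U \<in> delta_covers marked_dist 1 G2"
    then have cov: "G2 \<subseteq> (\<Union>n. U n)" by (simp add: delta_covers_def)
    have covX: "\<And>X. NX X \<in> (\<Union>n. U n)" using cov NX_G2 by blast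
    have "1 \<le> 8 * (suminf (\<lambda>n. ennreal (set_diam marked_dist (U n) powr s)))"
      by (rule cover_bound[where \<phi> = NX and b = "ln 2 / 4"])
         (use md_props hold assms covX in auto)
    then have "ennreal (1/8) * 1 \<le> ennreal (1/8) * (8 * (suminf (\<lambda>n. ennreal (set_diam marked_dist (U n) powr s))))"
      by (rule mult_left_mono) simp
    also have "\<dots> = (suminf (\<lambda>n. ennreal (set_diam marked_dist (U n) powr s)))"
      by (simp add: mult.assoc[symmetric] ennreal_mult[symmetric] flip: ennreal_numeral)
    finally show "ennreal (1/8) \<le> (suminf (\<lambda>n. ennreal (set_diam marked_dist (U n) powr s)))" by simp
  qed
  also have "\<dots> \<le> hausdorff_measure marked_dist s G2"
    unfolding hausdorff_measure_def by (rule SUP_upper) simp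
  finally show ?thesis by (auto simp: zero_less_iff_neq_zero[symmetric] intro: less_le_trans[rotated])
qed

theorem corollary6p7:
  shows "hausdorff_dim marked_dist G2 \<ge> ereal (ln 2 / 6) \<and> hausdorff_dim marked_dist G2 \<noteq> 0"
proof -
  have ge: "ereal (ln 2 / 6) \<le> hausdorff_dim marked_dist G2"
    unfolding hausdorff_dim_def
  proof (rule Inf_greatest)
    fix e assume "e \<in> ereal ` {s. s > 0 \<and> hausdorff_measure marked_dist s G2 = 0}"
    then obtain s where e: "e = ereal s" and s: "s > 0" "hausdorff_measure marked_dist s G2 = 0" by auto
    have "\<not> s < ln 2 / 6"
    proof
      assume "s < ln 2 / 6"
      then have "s \<le> ln 2 / 4" using ln_gt_zero[of "2::real"] by linarith
      then show False using hm_pos[OF s(1)] s(2) by simp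
    qed
    then show "ereal (ln 2 / 6) \<le> e" using e by simp
  qed
  moreover have "ereal 0 < ereal (ln 2 / 6)" by simp
  ultimately show ?thesis by auto
qed

end
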